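(* Consider any concurrent run of the Block-STM algorithm (described in the context) on a block of $n$ transactions. If at some time $T$ simultaneously $\mathit{execution\_idx}\ge n$, $\mathit{validation\_idx}\ge n$ and $\mathit{num\_active\_tasks}=0$, then all transactions $tx_0,\dots,tx_{n-1}$ are globally committed at time $T$.
   Context: Model: threads perform atomic operations that appear to take place in a single global order; a "time" is a point in this order. Locks protect per-transaction status and dependency sets. Problem. A block is a sequence of transactions $tx_0,\dots,tx_{n-1}$ ($n=\mathtt{BLOCK.size()}$), each a deterministic program reading and writing memory locations. Shared state. MVMemory: a map $\mathit{data}$ from pairs $(\text{location}, \text{txn index})$ to either (incarnation number, value) or a marker ESTIMATE; arrays $\mathit{last\_written\_locations}[j]$ and $\mathit{last\_read\_set}[j]$, each loaded/stored atomically. A version is $(j,i)$ (transaction index, incarnation number). Scheduler: atomic counters $\mathit{execution\_idx}=0$, $\mathit{validation\_idx}=0$, $\mathit{decrease\_cnt}=0$, $\mathit{num\_active\_tasks}=0$, flag $\mathit{done\_marker}=$false; per transaction $j$ a lock-protected $\mathit{txn\_status}[j]=(\text{incarnation},\text{status})$, initially $(0,\mathtt{READY\_TO\_EXECUTE})$, status $\in\{\mathtt{READY\_TO\_EXECUTE},\mathtt{EXECUTING},\mathtt{EXECUTED},\mathtt{ABORTING}\}$, and a lock-protected dependency set $\mathit{txn\_dependency}[j]$, initially empty. MVMemory operations. $\mathtt{read}(p,j)$: among entries $(p,k)$ with $k<j$ take the largest $k$; if none, return NOT_FOUND; if ESTIMATE return READ_ERROR with blocking index $k$; else OK with version and value.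 $\mathtt{record}((j,i),R,W)$: write $\mathit{data}[(p,j)]:=(i,v)$ for $(p,v)\in W$; remove entries $(p,j)$ for previously written locations not rewritten; update $\mathit{last\_written\_locations}[j]$; store $\mathit{last\_read\_set}[j]:=R$; return whether a location not previously written was written. $\mathtt{convert\_writes\_to\_estimates}(j)$ replaces all entries $(p,j)$, $p\in\mathit{last\_written\_locations}[j]$, by ESTIMATE. $\mathtt{validate\_read\_set}(j)$ re-reads each recorded location with $\mathtt{read}(p,j)$ and returns true iff each yields the same recorded version (NOT_FOUND for recorded $\bot$) and no READ_ERROR. VM.execute($j$) runs $tx_j$ locally, reading its own writes, otherwise calling $\mathtt{read}(p,j)$ (NOT_FOUND: read initial storage, record $(p,\bot)$; OK: record version; READ_ERROR: stop and return blocking index); returns read-set and write-set; it never writes shared memory. Scheduler. $\mathtt{decrease\_execution\_idx}(t)$/$\mathtt{decrease\_validation\_idx}(t)$ set the index to $\min(\text{index},t)$ then increment $\mathit{decrease\_cnt}$. $\mathtt{try\_incarnate}(k)$: if $k<n$ and status of $tx_k$ is $\mathtt{READY\_TO\_EXECUTE}$ with incarnation $i$, set $\mathtt{EXECUTING}$ and return $(k,i)$; else decrement $\mathit{num\_active\_tasks}$, return none. $\mathtt{next\_task}$: if $\mathit{validation\_idx}<\mathit{execution\_idx}$: if $\mathit{validation\_idx}\ge n$ call check_done, return none; else increment $\mathit{num\_active\_tasks}$, fetch-and-increment $\mathit{validation\_idx}$ getting $k$; if $k<n$ and $tx_k$'s status is $\mathtt{EXECUTED}$ with incarnation $i$ return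 validation task $(k,i)$, else decrement $\mathit{num\_active\_tasks}$, return none. Otherwise: if $\mathit{execution\_idx}\ge n$ call check_done, return none; else increment $\mathit{num\_active\_tasks}$, fetch-and-increment $\mathit{execution\_idx}$ getting $k$, return $\mathtt{try\_incarnate}(k)$. $\mathtt{check\_done}$: read $c:=\mathit{decrease\_cnt}$; if $\min(\mathit{execution\_idx},\mathit{validation\_idx})\ge n$, $\mathit{num\_active\_tasks}=0$ and $\mathit{decrease\_cnt}=c$, set $\mathit{done\_marker}:=$true. Execution task $(k,i)$: run VM.execute($k$). On READ_ERROR with blocking $b$: under lock of $\mathit{txn\_dependency}[b]$, if status of $tx_b$ is $\mathtt{EXECUTED}$, retry the execution immediately; else set $tx_k$'s status to $\mathtt{ABORTING}$, add $k$ to $\mathit{txn\_dependency}[b]$, release, decrement $\mathit{num\_active\_tasks}$. Otherwise $w:=\mathtt{record}(\dots)$; set status $\mathtt{EXECUTED}$; swap out $\mathit{txn\_dependency}[k]$; for each dependent $d$ set $\mathit{txn\_status}[d]:=(\text{incarnation}+1,\mathtt{READY\_TO\_EXECUTE})$, and if any, $\mathtt{decrease\_execution\_idx}$(min dependent); if $\mathit{validation\_idx}>k$: if $w$ then $\mathtt{decrease\_validation\_idx}(k)$ else return validation task $(k,i)$ to the caller without changing $\mathit{num\_active\_tasks}$; if no task returned, decrement $\mathit{num\_active\_tasks}$. Validation task $(k,i)$: if $\mathtt{validate\_read\_set}(k)$ is false and, under lock, $\mathit{txn\_status}[k]=(i,\mathtt{EXECUTED})$, set status $\mathtt{ABORTING}$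 (aborted). If aborted: convert writes of $k$ to ESTIMATE; set $\mathit{txn\_status}[k]:=(i+1,\mathtt{READY\_TO\_EXECUTE})$; $\mathtt{decrease\_validation\_idx}(k+1)$; if $\mathit{execution\_idx}>k$ and $\mathtt{try\_incarnate}(k)$ returns a version, return that execution task (without changing $\mathit{num\_active\_tasks}$). Otherwise decrement $\mathit{num\_active\_tasks}$. Each thread loops while $\mathit{done\_marker}$ is false, performing tasks in hand or obtained via next_task; it joins on exit. Intervals. Pre-validation of $tx_j$: from a fetch-and-increment of $\mathit{validation\_idx}$ returning $j$ until just before the corresponding decrement in next_task or just before the resulting validation task is returned. Execution of $(j,i)$: from setting $tx_j$'s status to $\mathtt{EXECUTING}$ (incarnation $i$) until abort via the dependency mechanism, or just before the final decrement of $\mathit{num\_active\_tasks}$ after it, or just before a validation task is returned from it. Validation of $(j,i)$: from handing the validation task to a thread until just before its final decrement of $\mathit{num\_active\_tasks}$ or just before it returns an execution task. Global commit index at time $T$: minimum of $\mathit{validation\_idx}$, all $j$ with status not $\mathtt{EXECUTED}$, indices with ongoing pre-validation, and indices of versions with ongoing execution or validation. $tx_0,\dots,tx_k$ are globally committed at $T$ if this index exceeds $k$. *)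

theory Defs
  imports Main
begin

text \<open>Transactions are deterministic programs over locations 'l and values 'v.
  A program reads a location (continuing with the value read), writes a
  location locally, or finishes.\<close>

datatype ('l, 'v) prog =
    Done
  | Read 'l "'v \<Rightarrow> ('l, 'v) prog"
  | Write 'l 'v "('l, 'v) prog"

type_synonym version = "nat \<times> nat"  (* (transaction index, incarnation number) *)

datatype 'v entry = Written nat 'v | Estimate

datatype 'v read_result = NotFound | OkRead version 'v | ReadError nat

datatype tstatus = Ready_To_Execute | Executing | Executed | Aborting

datatype task = ExecTask nat nat | ValTask nat nat

text \<open>Program counters of a thread, together with its local variables.\<close>

datatype ('l, 'v) pc =
    Loop "task option"                 (* main loop head, with the task in hand *)
  | Exited
  (* next_task *)
  | NT_ReadV
  | NT_ReadE nat
  | NTV_Check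
  | NTV_Inc
  | NTV_Fetch
  | NTV_Status nat
  | NTV_Dec nat
  | NTE_Check
  | NTE_Inc
  | NTE_Fetch
  | TI_NT nat                          (* try_incarnate called from next_task *)
  | TI_NT_Dec
  (* check_done *)
  | CD_Start
  | CD_E nat
  | CD_V nat nat
  | CD_A nat
  | CD_C nat
  | CD_Set
  (* execution task (k,i) *)
  | ExRun nat nat "('l, 'v) prog" "'l \<Rightarrow> 'v option" "('l \<times> version option) list"
  | EX_Lock nat nat nat
  | EX_CheckB nat nat nat
  | EX_Retry nat nat nat
  | EX_Abort nat nat nat
  | EX_AddDep nat nat
  | EX_Release nat
  | EX_DepDec
  | EX_Record nat nat "'l \<Rightarrow> 'v option" "('l \<times> version option) list"
  | EX_SetExecuted nat nat bool
  | EX_Swap nat nat bool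
  | EX_Resume nat nat bool "nat set" "nat set"
  | EX_DecE nat nat bool nat
  | EX_DecE_Cnt nat nat bool
  | EX_ReadV nat nat bool
  | EX_DecV nat nat
  | EX_DecV_Cnt nat nat
  | EX_FinalDec nat nat
  (* validation task (k,i) *)
  | VA_Load nat nat
  | VA_Read nat nat "('l \<times> version option) list"
  | VA_Lock nat nat
  | VA_Convert nat nat
  | VA_SetReady nat nat
  | VA_DecV nat nat
  | VA_DecV_Cnt nat nat
  | VA_ReadE nat nat
  | TI_V nat nat                       (* try_incarnate called from the validation task *)
  | VA_TIDec nat nat
  | VA_FinalDec nat nat

record ('l, 'v) bstate =
  exec_idx :: nat
  val_idx :: nat
  dec_cnt :: nat
  num_active :: int
  done_marker :: bool
  txn_status :: "nat \<Rightarrow> nat \<times> tstatus"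
  txn_dep :: "nat \<Rightarrow> nat set"
  dep_lock :: "nat \<Rightarrow> bool"
  mv_data :: "'l \<Rightarrow> nat \<Rightarrow> 'v entry option"
  last_written :: "nat \<Rightarrow> 'l set"
  last_read :: "nat \<Rightarrow> ('l \<times> version option) list"
  pcs :: "nat \<Rightarrow> ('l, 'v) pc"

definition init_state :: "('l, 'v) bstate" where
  "init_state = \<lparr> exec_idx = 0, val_idx = 0, dec_cnt = 0, num_active = 0,
     done_marker = False, txn_status = (\<lambda>_. (0, Ready_To_Execute)),
     txn_dep = (\<lambda>_. {}), dep_lock = (\<lambda>_. False), mv_data = (\<lambda>_ _. None),
     last_written = (\<lambda>_. {}), last_read = (\<lambda>_. []), pcs = (\<lambda>_. Loop None) \<rparr>"

subsection \<open>MVMemory operations\<close>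

definition mvread :: "('l \<Rightarrow> nat \<Rightarrow> 'v entry option) \<Rightarrow> 'l \<Rightarrow> nat \<Rightarrow> 'v read_result" where
  "mvread d p j =
     (if \<forall>k<j. d p k = None then NotFound
      else (let k = (GREATEST k. k < j \<and> d p k \<noteq> None) in
            case the (d p k) of Estimate \<Rightarrow> ReadError k | Written i v \<Rightarrow> OkRead (k, i) v))"


definition mv_record ::
  "nat \<Rightarrow> nat \<Rightarrow> ('l \<times> version option) list \<Rightarrow> ('l \<Rightarrow> 'v option) \<Rightarrow> ('l, 'v) bstate \<Rightarrow> ('l, 'v) bstate" where
  "mv_record j i R W s = s \<lparr>
     mv_data := (\<lambda>p k. if k = j then
                          (case W p of Some v \<Rightarrow> Some (Written i v)
                           | None \<Rightarrow> if p \<in> last_written s j then None else mv_data s p k)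
                        else mv_data s p k),
     last_written := (last_written s)(j := dom W),
     last_read := (last_read s)(j := R) \<rparr>"

definition wrote_new_location :: "nat \<Rightarrow> ('l \<Rightarrow> 'v option) \<Rightarrow> ('l, 'v) bstate \<Rightarrow> bool" where
  "wrote_new_location j W s = (\<not> dom W \<subseteq> last_written s j)"

definition convert_writes_to_estimates :: "nat \<Rightarrow> ('l, 'v) bstate \<Rightarrow> ('l, 'v) bstate" where
  "convert_writes_to_estimates j s = s \<lparr>
     mv_data := (\<lambda>p k. if k = j \<and> p \<in> last_written s j then Some Estimate else mv_data s p k) \<rparr>"

fun read_matches :: "version option \<Rightarrow> 'v read_result \<Rightarrow> bool" where
  "read_matches None r = (r = NotFound)"
| "read_matches (Some ver) r = (\<exists>v. r = OkRead ver v)"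

definition setpc :: "nat \<Rightarrow> ('l, 'v) pc \<Rightarrow> ('l, 'v) bstate \<Rightarrow> ('l, 'v) bstate" where
  "setpc t p s = s \<lparr> pcs := (pcs s)(t := p) \<rparr>"

definition add_active :: "int \<Rightarrow> ('l, 'v) bstate \<Rightarrow> ('l, 'v) bstate" where
  "add_active d s = s \<lparr> num_active := num_active s + d \<rparr>"

definition set_status :: "nat \<Rightarrow> nat \<times> tstatus \<Rightarrow> ('l, 'v) bstate \<Rightarrow> ('l, 'v) bstate" where
  "set_status k st s = s \<lparr> txn_status := (txn_status s)(k := st) \<rparr>"

text \<open>Parameters: n = BLOCK.size(), tx = the transactions, init = initial storage.\<close>

inductive tstep :: "nat \<Rightarrow> (nat \<Rightarrow> ('l, 'v) prog) \<Rightarrow> ('l \<Rightarrow> 'v) \<Rightarrow> nat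
                     \<Rightarrow> ('l, 'v) bstate \<Rightarrow> ('l, 'v) bstate \<Rightarrow> bool"
  for n :: nat and tx :: "nat \<Rightarrow> ('l, 'v) prog" and init :: "'l \<Rightarrow> 'v" and t :: nat where
  loop_done: "pcs s t = Loop tk \<Longrightarrow> done_marker s \<Longrightarrow> tstep n tx init t s (setpc t Exited s)"
| loop_none: "pcs s t = Loop None \<Longrightarrow> \<not> done_marker s \<Longrightarrow> tstep n tx init t s (setpc t NT_ReadV s)"
| loop_exec: "pcs s t = Loop (Some (ExecTask k i)) \<Longrightarrow> \<not> done_marker s \<Longrightarrow>
     tstep n tx init t s (setpc t (ExRun k i (tx k) Map.empty []) s)"
| loop_val: "pcs s t = Loop (Some (ValTask k i)) \<Longrightarrow> \<not> done_marker s \<Longrightarrow>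
     tstep n tx init t s (setpc t (VA_Load k i) s)"
  (* next_task *)
| nt_readv: "pcs s t = NT_ReadV \<Longrightarrow> tstep n tx init t s (setpc t (NT_ReadE (val_idx s)) s)"
| nt_reade: "pcs s t = NT_ReadE vi \<Longrightarrow>
     tstep n tx init t s (setpc t (if vi < exec_idx s then NTV_Check else NTE_Check) s)"
| ntv_check: "pcs s t = NTV_Check \<Longrightarrow>
     tstep n tx init t s (setpc t (if n \<le> val_idx s then CD_Start else NTV_Inc) s)"
| ntv_inc: "pcs s t = NTV_Inc \<Longrightarrow> tstep n tx init t s (setpc t NTV_Fetch (add_active 1 s))"
| ntv_fetch: "pcs s t = NTV_Fetch \<Longrightarrow>
     tstep n tx init t s (setpc t (if val_idx s < n then NTV_Status (val_idx s) else NTV_Dec (val_idx s))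
                           (s \<lparr> val_idx := val_idx s + 1 \<rparr>))"
| ntv_status_ok: "pcs s t = NTV_Status k \<Longrightarrow> txn_status s k = (i, Executed) \<Longrightarrow>
     tstep n tx init t s (setpc t (Loop (Some (ValTask k i))) s)"
| ntv_status_no: "pcs s t = NTV_Status k \<Longrightarrow> snd (txn_status s k) \<noteq> Executed \<Longrightarrow>
     tstep n tx init t s (setpc t (NTV_Dec k) s)"
| ntv_dec: "pcs s t = NTV_Dec k \<Longrightarrow> tstep n tx init t s (setpc t (Loop None) (add_active (-1) s))"
| nte_check: "pcs s t = NTE_Check \<Longrightarrow>
     tstep n tx init t s (setpc t (if n \<le> exec_idx s then CD_Start else NTE_Inc) s)"
| nte_inc: "pcs s t = NTE_Inc \<Longrightarrow> tstep n tx init t s (setpc t NTE_Fetch (add_active 1 s))"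
| nte_fetch: "pcs s t = NTE_Fetch \<Longrightarrow>
     tstep n tx init t s (setpc t (TI_NT (exec_idx s)) (s \<lparr> exec_idx := exec_idx s + 1 \<rparr>))"
| ti_nt_ok: "pcs s t = TI_NT k \<Longrightarrow> k < n \<Longrightarrow> txn_status s k = (i, Ready_To_Execute) \<Longrightarrow>
     tstep n tx init t s (setpc t (Loop (Some (ExecTask k i))) (set_status k (i, Executing) s))"
| ti_nt_fail: "pcs s t = TI_NT k \<Longrightarrow> \<not> (k < n \<and> snd (txn_status s k) = Ready_To_Execute) \<Longrightarrow>
     tstep n tx init t s (setpc t TI_NT_Dec s)"
| ti_nt_dec: "pcs s t = TI_NT_Dec \<Longrightarrow> tstep n tx init t s (setpc t (Loop None) (add_active (-1) s))"
  (* check_done *)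
| cd_start: "pcs s t = CD_Start \<Longrightarrow> tstep n tx init t s (setpc t (CD_E (dec_cnt s)) s)"
| cd_e: "pcs s t = CD_E c \<Longrightarrow> tstep n tx init t s (setpc t (CD_V c (exec_idx s)) s)"
| cd_v: "pcs s t = CD_V c e \<Longrightarrow>
     tstep n tx init t s (setpc t (if n \<le> min e (val_idx s) then CD_A c else Loop None) s)"
| cd_a: "pcs s t = CD_A c \<Longrightarrow>
     tstep n tx init t s (setpc t (if num_active s = 0 then CD_C c else Loop None) s)"
| cd_c: "pcs s t = CD_C c \<Longrightarrow>
     tstep n tx init t s (setpc t (if dec_cnt s = c then CD_Set else Loop None) s)"
| cd_set: "pcs s t = CD_Set \<Longrightarrow> tstep n tx init t s (setpc t (Loop None) (s \<lparr> done_marker := True \<rparr>))"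
  (* execution task: VM.execute *)
| ex_write: "pcs s t = ExRun k i (Write p v q) W R \<Longrightarrow>
     tstep n tx init t s (setpc t (ExRun k i q (W(p \<mapsto> v)) R) s)"
| ex_read_own: "pcs s t = ExRun k i (Read p f) W R \<Longrightarrow> W p = Some v \<Longrightarrow>
     tstep n tx init t s (setpc t (ExRun k i (f v) W R) s)"
| ex_read_nf: "pcs s t = ExRun k i (Read p f) W R \<Longrightarrow> W p = None \<Longrightarrow> mvread (mv_data s) p k = NotFound \<Longrightarrow>
     tstep n tx init t s (setpc t (ExRun k i (f (init p)) W (R @ [(p, None)])) s)"
| ex_read_ok: "pcs s t = ExRun k i (Read p f) W R \<Longrightarrow> W p = None \<Longrightarrow> mvread (mv_data s) p k = OkRead ver v \<Longrightarrow>
     tstep n tx init t s (setpc t (ExRun k i (f v) W (R @ [(p, Some ver)])) s)"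
| ex_read_err: "pcs s t = ExRun k i (Read p f) W R \<Longrightarrow> W p = None \<Longrightarrow> mvread (mv_data s) p k = ReadError b \<Longrightarrow>
     tstep n tx init t s (setpc t (EX_Lock k i b) s)"
  (* READ_ERROR: dependency handling under the lock of txn_dependency[b] *)
| ex_lock: "pcs s t = EX_Lock k i b \<Longrightarrow> \<not> dep_lock s b \<Longrightarrow>
     tstep n tx init t s (setpc t (EX_CheckB k i b) (s \<lparr> dep_lock := (dep_lock s)(b := True) \<rparr>))"
| ex_checkb_retry: "pcs s t = EX_CheckB k i b \<Longrightarrow> snd (txn_status s b) = Executed \<Longrightarrow>
     tstep n tx init t s (setpc t (EX_Retry k i b) s)"
| ex_checkb_abort: "pcs s t = EX_CheckB k i b \<Longrightarrow> snd (txn_status s b) \<noteq> Executed \<Longrightarrow>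
     tstep n tx init t s (setpc t (EX_Abort k i b) s)"
| ex_retry: "pcs s t = EX_Retry k i b \<Longrightarrow>
     tstep n tx init t s (setpc t (ExRun k i (tx k) Map.empty []) (s \<lparr> dep_lock := (dep_lock s)(b := False) \<rparr>))"
| ex_abort: "pcs s t = EX_Abort k i b \<Longrightarrow>
     tstep n tx init t s (setpc t (EX_AddDep k b) (set_status k (fst (txn_status s k), Aborting) s))"
| ex_adddep: "pcs s t = EX_AddDep k b \<Longrightarrow>
     tstep n tx init t s (setpc t (EX_Release b) (s \<lparr> txn_dep := (txn_dep s)(b := insert k (txn_dep s b)) \<rparr>))"
| ex_release: "pcs s t = EX_Release b \<Longrightarrow>
     tstep n tx init t s (setpc t EX_DepDec (s \<lparr> dep_lock := (dep_lock s)(b := False) \<rparr>))"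
| ex_depdec: "pcs s t = EX_DepDec \<Longrightarrow> tstep n tx init t s (setpc t (Loop None) (add_active (-1) s))"
  (* successful execution: record and finish_execution *)
| ex_done: "pcs s t = ExRun k i Done W R \<Longrightarrow> tstep n tx init t s (setpc t (EX_Record k i W R) s)"
| ex_record: "pcs s t = EX_Record k i W R \<Longrightarrow>
     tstep n tx init t s (setpc t (EX_SetExecuted k i (wrote_new_location k W s)) (mv_record k i R W s))"
| ex_setexec: "pcs s t = EX_SetExecuted k i w \<Longrightarrow>
     tstep n tx init t s (setpc t (EX_Swap k i w) (set_status k (i, Executed) s))"
| ex_swap: "pcs s t = EX_Swap k i w \<Longrightarrow> \<not> dep_lock s k \<Longrightarrow>
     tstep n tx init t s (setpc t (EX_Resume k i w (txn_dep s k) (txn_dep s k))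
                           (s \<lparr> txn_dep := (txn_dep s)(k := {}) \<rparr>))"
| ex_resume: "pcs s t = EX_Resume k i w D A \<Longrightarrow> d \<in> D \<Longrightarrow>
     tstep n tx init t s (setpc t (EX_Resume k i w (D - {d}) A)
                           (set_status d (fst (txn_status s d) + 1, Ready_To_Execute) s))"
| ex_resume_end: "pcs s t = EX_Resume k i w {} A \<Longrightarrow>
     tstep n tx init t s (setpc t (if A = {} then EX_ReadV k i w else EX_DecE k i w (Min A)) s)"
| ex_dece: "pcs s t = EX_DecE k i w m \<Longrightarrow>
     tstep n tx init t s (setpc t (EX_DecE_Cnt k i w) (s \<lparr> exec_idx := min (exec_idx s) m \<rparr>))"
| ex_dece_cnt: "pcs s t = EX_DecE_Cnt k i w \<Longrightarrow>
     tstep n tx init t s (setpc t (EX_ReadV k i w) (s \<lparr> dec_cnt := dec_cnt s + 1 \<rparr>))"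
| ex_readv: "pcs s t = EX_ReadV k i w \<Longrightarrow>
     tstep n tx init t s (setpc t (if k < val_idx s then (if w then EX_DecV k i else Loop (Some (ValTask k i)))
                                   else EX_FinalDec k i) s)"
| ex_decv: "pcs s t = EX_DecV k i \<Longrightarrow>
     tstep n tx init t s (setpc t (EX_DecV_Cnt k i) (s \<lparr> val_idx := min (val_idx s) k \<rparr>))"
| ex_decv_cnt: "pcs s t = EX_DecV_Cnt k i \<Longrightarrow>
     tstep n tx init t s (setpc t (EX_FinalDec k i) (s \<lparr> dec_cnt := dec_cnt s + 1 \<rparr>))"
| ex_finaldec: "pcs s t = EX_FinalDec k i \<Longrightarrow> tstep n tx init t s (setpc t (Loop None) (add_active (-1) s))"
| va_load: "pcs s t = VA_Load k i \<Longrightarrow> tstep n tx init t s (setpc t (VA_Read k i (last_read s k)) s)"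
| va_read_ok: "pcs s t = VA_Read k i ((p, r) # rest) \<Longrightarrow> read_matches r (mvread (mv_data s) p k) \<Longrightarrow>
     tstep n tx init t s (setpc t (VA_Read k i rest) s)"
| va_read_bad: "pcs s t = VA_Read k i ((p, r) # rest) \<Longrightarrow> \<not> read_matches r (mvread (mv_data s) p k) \<Longrightarrow>
     tstep n tx init t s (setpc t (VA_Lock k i) s)"
| va_valid: "pcs s t = VA_Read k i [] \<Longrightarrow> tstep n tx init t s (setpc t (VA_FinalDec k i) s)"
| va_lock_abort: "pcs s t = VA_Lock k i \<Longrightarrow> txn_status s k = (i, Executed) \<Longrightarrow>
     tstep n tx init t s (setpc t (VA_Convert k i) (set_status k (i, Aborting) s))"
| va_lock_no: "pcs s t = VA_Lock k i \<Longrightarrow> txn_status s k \<noteq> (i, Executed) \<Longrightarrow>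
     tstep n tx init t s (setpc t (VA_FinalDec k i) s)"
| va_convert: "pcs s t = VA_Convert k i \<Longrightarrow>
     tstep n tx init t s (setpc t (VA_SetReady k i) (convert_writes_to_estimates k s))"
| va_setready: "pcs s t = VA_SetReady k i \<Longrightarrow>
     tstep n tx init t s (setpc t (VA_DecV k i) (set_status k (i + 1, Ready_To_Execute) s))"
| va_decv: "pcs s t = VA_DecV k i \<Longrightarrow>
     tstep n tx init t s (setpc t (VA_DecV_Cnt k i) (s \<lparr> val_idx := min (val_idx s) (k + 1) \<rparr>))"
| va_decv_cnt: "pcs s t = VA_DecV_Cnt k i \<Longrightarrow>
     tstep n tx init t s (setpc t (VA_ReadE k i) (s \<lparr> dec_cnt := dec_cnt s + 1 \<rparr>))"
| va_reade: "pcs s t = VA_ReadE k i \<Longrightarrow>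
     tstep n tx init t s (setpc t (if k < exec_idx s then TI_V k i else VA_FinalDec k i) s)"
| ti_v_ok: "pcs s t = TI_V k i \<Longrightarrow> k < n \<Longrightarrow> txn_status s k = (j, Ready_To_Execute) \<Longrightarrow>
     tstep n tx init t s (setpc t (Loop (Some (ExecTask k j))) (set_status k (j, Executing) s))"
| ti_v_fail: "pcs s t = TI_V k i \<Longrightarrow> \<not> (k < n \<and> snd (txn_status s k) = Ready_To_Execute) \<Longrightarrow>
     tstep n tx init t s (setpc t (VA_TIDec k i) s)"
| va_tidec: "pcs s t = VA_TIDec k i \<Longrightarrow> tstep n tx init t s (setpc t (Loop None) (add_active (-1) s))"
| va_finaldec: "pcs s t = VA_FinalDec k i \<Longrightarrow> tstep n tx init t s (setpc t (Loop None) (add_active (-1) s))"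

definition bstep :: "nat \<Rightarrow> (nat \<Rightarrow> ('l, 'v) prog) \<Rightarrow> ('l \<Rightarrow> 'v) \<Rightarrow> nat
                     \<Rightarrow> ('l, 'v) bstate \<Rightarrow> ('l, 'v) bstate \<Rightarrow> bool" where
  "bstep n tx init m s s' = (\<exists>t<m. tstep n tx init t s s')"

subsection \<open>Ongoing intervals and the global commit index\<close>

fun prevalidation :: "('l, 'v) pc \<Rightarrow> nat option" where
  "prevalidation (NTV_Status k) = Some k"
| "prevalidation (NTV_Dec k) = Some k"
| "prevalidation _ = None"

fun ongoing_execution :: "('l, 'v) pc \<Rightarrow> version option" where
  "ongoing_execution (Loop (Some (ExecTask k i))) = Some (k, i)"
| "ongoing_execution (ExRun k i _ _ _) = Some (k, i)"
| "ongoing_execution (EX_Lock k i _) = Some (k, i)"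
| "ongoing_execution (EX_CheckB k i _) = Some (k, i)"
| "ongoing_execution (EX_Retry k i _) = Some (k, i)"
| "ongoing_execution (EX_Abort k i _) = Some (k, i)"
| "ongoing_execution (EX_Record k i _ _) = Some (k, i)"
| "ongoing_execution (EX_SetExecuted k i _) = Some (k, i)"
| "ongoing_execution (EX_Swap k i _) = Some (k, i)"
| "ongoing_execution (EX_Resume k i _ _ _) = Some (k, i)"
| "ongoing_execution (EX_DecE k i _ _) = Some (k, i)"
| "ongoing_execution (EX_DecE_Cnt k i _) = Some (k, i)"
| "ongoing_execution (EX_ReadV k i _) = Some (k, i)"
| "ongoing_execution (EX_DecV k i) = Some (k, i)"
| "ongoing_execution (EX_DecV_Cnt k i) = Some (k, i)"
| "ongoing_execution (EX_FinalDec k i) = Some (k, i)"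
| "ongoing_execution _ = None"

fun ongoing_validation :: "('l, 'v) pc \<Rightarrow> version option" where
  "ongoing_validation (Loop (Some (ValTask k i))) = Some (k, i)"
| "ongoing_validation (VA_Load k i) = Some (k, i)"
| "ongoing_validation (VA_Read k i _) = Some (k, i)"
| "ongoing_validation (VA_Lock k i) = Some (k, i)"
| "ongoing_validation (VA_Convert k i) = Some (k, i)"
| "ongoing_validation (VA_SetReady k i) = Some (k, i)"
| "ongoing_validation (VA_DecV k i) = Some (k, i)"
| "ongoing_validation (VA_DecV_Cnt k i) = Some (k, i)"
| "ongoing_validation (VA_ReadE k i) = Some (k, i)"
| "ongoing_validation (TI_V k i) = Some (k, i)"
| "ongoing_validation (VA_TIDec k i) = Some (k, i)"
| "ongoing_validation (VA_FinalDec k i) = Some (k, i)"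
| "ongoing_validation _ = None"

definition commit_index :: "nat \<Rightarrow> nat \<Rightarrow> ('l, 'v) bstate \<Rightarrow> nat" where
  "commit_index n m s = Min ({val_idx s}
      \<union> {j. j < n \<and> snd (txn_status s j) \<noteq> Executed}
      \<union> {j. \<exists>t<m. prevalidation (pcs s t) = Some j}
      \<union> {j. \<exists>t<m. \<exists>i. ongoing_execution (pcs s t) = Some (j, i)}
      \<union> {j. \<exists>t<m. \<exists>i. ongoing_validation (pcs s t) = Some (j, i)})"

definition globally_committed :: "nat \<Rightarrow> nat \<Rightarrow> ('l, 'v) bstate \<Rightarrow> nat \<Rightarrow> bool" where
  "globally_committed n m s k = (k < commit_index n m s)"

end

theory Submission
  imports Defs
begin


fun active :: "('l,'v) pc \<Rightarrow> bool" where
  "active (Loop None) = False"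
| "active Exited = False"
| "active NT_ReadV = False"
| "active (NT_ReadE _) = False"
| "active NTV_Check = False"
| "active NTV_Inc = False"
| "active NTE_Check = False"
| "active NTE_Inc = False"
| "active CD_Start = False"
| "active (CD_E _) = False"
| "active (CD_V _ _) = False"
| "active (CD_A _) = False"
| "active (CD_C _) = False"
| "active CD_Set = False"
| "active _ = True"

fun rclaim :: "nat \<Rightarrow> ('l,'v) pc \<Rightarrow> bool" where
  "rclaim j (TI_NT k) = (k = j)"
| "rclaim j (EX_Resume k i w D A) = (j \<in> A)"
| "rclaim j (EX_DecE k i w x) = (x \<le> j)"
| "rclaim j (VA_DecV k i) = (k = j)"
| "rclaim j (VA_DecV_Cnt k i) = (k = j)"
| "rclaim j (VA_ReadE k i) = (k = j)"
| "rclaim j (TI_V k i) = (k = j)"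
| "rclaim j _ = False"

fun eclaim :: "nat \<Rightarrow> ('l,'v) pc \<Rightarrow> bool" where
  "eclaim j (Loop (Some (ExecTask k i))) = (k = j)"
| "eclaim j (ExRun k i _ _ _) = (k = j)"
| "eclaim j (EX_Lock k i b) = (k = j)"
| "eclaim j (EX_CheckB k i b) = (k = j)"
| "eclaim j (EX_Retry k i b) = (k = j)"
| "eclaim j (EX_Abort k i b) = (k = j)"
| "eclaim j (EX_Record k i _ _) = (k = j)"
| "eclaim j (EX_SetExecuted k i _) = (k = j)"
| "eclaim j _ = False"

fun aclaim :: "nat \<Rightarrow> ('l,'v) pc \<Rightarrow> bool" where
  "aclaim j (EX_AddDep k b) = (k = j)"
| "aclaim j (VA_Convert k i) = (k = j)"
| "aclaim j (VA_SetReady k i) = (k = j)"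
| "aclaim j (EX_Resume k i w D A) = (j \<in> D)"
| "aclaim j _ = False"

fun holds :: "('l,'v) pc \<Rightarrow> nat option" where
  "holds (EX_CheckB k i b) = Some b"
| "holds (EX_Retry k i b) = Some b"
| "holds (EX_Abort k i b) = Some b"
| "holds (EX_AddDep k b) = Some b"
| "holds (EX_Release b) = Some b"
| "holds _ = None"

fun blk :: "('l,'v) pc \<Rightarrow> (nat \<times> nat) option" where
  "blk (EX_Lock k i b) = Some (k, b)"
| "blk (EX_CheckB k i b) = Some (k, b)"
| "blk (EX_Retry k i b) = Some (k, b)"
| "blk (EX_Abort k i b) = Some (k, b)"
| "blk (EX_AddDep k b) = Some (k, b)"
| "blk _ = None"

fun absd :: "('l,'v) pc \<Rightarrow> nat option" where
  "absd (EX_Abort k i b) = Some b"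
| "absd (EX_AddDep k b) = Some b"
| "absd _ = None"

fun swp :: "('l,'v) pc \<Rightarrow> nat option" where
  "swp (EX_Swap k i w) = Some k"
| "swp _ = None"

fun resv :: "('l,'v) pc \<Rightarrow> bool" where
  "resv (EX_Resume k i w D A) = (finite A \<and> D \<subseteq> A)"
| "resv _ = True"

definition cntf :: "nat \<Rightarrow> (nat \<Rightarrow> ('l,'v) pc) \<Rightarrow> int" where
  "cntf m f = int (card {t. t < m \<and> active (f t)})"

abbreviation cnt :: "nat \<Rightarrow> ('l,'v) bstate \<Rightarrow> int" where
  "cnt m s \<equiv> cntf m (pcs s)"

lemma card_split:
  assumes "(t::nat) < m"
  shows "card {t'. t' < m \<and> Q t'} = card {t'. t' < m \<and> t' \<noteq> t \<and> Q t'} + (if Q t then 1 else 0)"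
proof (cases "Q t")
  case True
  have "{t'. t' < m \<and> Q t'} = insert t {t'. t' < m \<and> t' \<noteq> t \<and> Q t'}" using True assms by auto
  then show ?thesis using True by simp
next
  case False
  have "{t'. t' < m \<and> Q t'} = {t'. t' < m \<and> t' \<noteq> t \<and> Q t'}" using False by auto
  then show ?thesis using False by simp
qed

lemma cntf_upd:
  assumes "t < m"
  shows "cntf m (f(t := p)) = cntf m f - (if active (f t) then 1 else 0) + (if active p then 1 else 0)"
proof -
  have a: "{t'. t' < m \<and> t' \<noteq> t \<and> active ((f(t := p)) t')} = {t'. t' < m \<and> t' \<noteq> t \<and> active (f t')}"
    by auto
  show ?thesis
    unfolding cntf_def
    using card_split[OF assms, of "\<lambda>t'. active ((f(t := p)) t')"]
      card_split[OF assms, of "\<lambda>t'. active (f t')"] a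
    by simp
qed

lemmas defs = setpc_def add_active_def set_status_def mv_record_def convert_writes_to_estimates_def

lemma surplus_mono:
  assumes "tstep n tx init t s s'" "t < m"
  shows "num_active s - cnt m s \<le> num_active s' - cnt m s'"
  using assms(1)
  apply (cases rule: tstep.cases)
  apply (auto simp: cntf_upd[OF assms(2)] defs)
  done


lemma mvread_err: "mvread d p j = ReadError b \<Longrightarrow> b < j"
proof -
  assume h: "mvread d p j = ReadError b"
  then have ne: "\<not> (\<forall>k<j. d p k = None)" unfolding mvread_def by (cases "\<forall>k<j. d p k = None") auto
  define g where "g = (GREATEST k. k < j \<and> d p k \<noteq> None)"
  from ne obtain k where k: "k < j \<and> d p k \<noteq> None" by auto
  have "g < j \<and> d p g \<noteq> None" unfolding g_def
    by (rule GreatestI_nat[of _ k j]) (use k in auto)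
  moreover have "b = g" using h ne unfolding mvread_def g_def[symmetric] Let_def
    by (auto split: entry.splits option.splits)
  ultimately show ?thesis by simp
qed

definition ext :: "nat \<Rightarrow> (nat \<Rightarrow> ('l,'v) pc) \<Rightarrow> (('l,'v) pc \<Rightarrow> bool) \<Rightarrow> bool" where
  "ext m f Q = (\<exists>t<m. Q (f t))"
definition exo :: "nat \<Rightarrow> (nat \<Rightarrow> ('l,'v) pc) \<Rightarrow> nat \<Rightarrow> (('l,'v) pc \<Rightarrow> bool) \<Rightarrow> bool" where
  "exo m f t Q = (\<exists>t'<m. t' \<noteq> t \<and> Q (f t'))"
lemma exo_upd[simp]: "exo m (f(t:=p)) t Q = exo m f t Q"
  unfolding exo_def by auto
lemma ext_split: "t < m \<Longrightarrow> ext m f Q = (Q (f t) \<or> exo m f t Q)"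
  unfolding ext_def exo_def by auto

definition I_fin :: "('l,'v) bstate \<Rightarrow> bool" where
  "I_fin s = (\<forall>b. finite (txn_dep s b))"
definition I_res :: "nat \<Rightarrow> ('l,'v) bstate \<Rightarrow> bool" where
  "I_res m s = (\<forall>t<m. resv (pcs s t))"
definition I_lock :: "nat \<Rightarrow> ('l,'v) bstate \<Rightarrow> bool" where
  "I_lock m s = ((\<forall>b. dep_lock s b = (\<exists>t<m. holds (pcs s t) = Some b)) \<and>
     (\<forall>t<m. \<forall>t'<m. holds (pcs s t) \<noteq> None \<longrightarrow> holds (pcs s t) = holds (pcs s t') \<longrightarrow> t = t'))"
definition I_blk :: "nat \<Rightarrow> ('l,'v) bstate \<Rightarrow> bool" where
  "I_blk m s = ((\<forall>t<m. \<forall>k b. blk (pcs s t) = Some (k, b) \<longrightarrow> b < k) \<and>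
     (\<forall>b j. j \<in> txn_dep s b \<longrightarrow> b < j))"
definition I_abs :: "nat \<Rightarrow> ('l,'v) bstate \<Rightarrow> bool" where
  "I_abs m s = (\<forall>t<m. \<forall>b. absd (pcs s t) = Some b \<longrightarrow>
      snd (txn_status s b) \<noteq> Executed \<or> ext m (pcs s) (\<lambda>p. swp p = Some b))"
definition I_dep :: "nat \<Rightarrow> ('l,'v) bstate \<Rightarrow> bool" where
  "I_dep m s = (\<forall>b. txn_dep s b \<noteq> {} \<longrightarrow>
      snd (txn_status s b) \<noteq> Executed \<or> ext m (pcs s) (\<lambda>p. swp p = Some b))"
definition I_cnt :: "nat \<Rightarrow> ('l,'v) bstate \<Rightarrow> bool" where
  "I_cnt m s = (cnt m s \<le> num_active s)"
definition I_rdy :: "nat \<Rightarrow> nat \<Rightarrow> ('l,'v) bstate \<Rightarrow> bool" where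
  "I_rdy n m s = (\<forall>j<n. snd (txn_status s j) = Ready_To_Execute \<longrightarrow>
      exec_idx s \<le> j \<or> ext m (pcs s) (rclaim j))"
definition I_exe :: "nat \<Rightarrow> nat \<Rightarrow> ('l,'v) bstate \<Rightarrow> bool" where
  "I_exe n m s = (\<forall>j<n. snd (txn_status s j) = Executing \<longrightarrow>
      cnt m s < num_active s \<or> ext m (pcs s) (eclaim j))"
definition I_abt :: "nat \<Rightarrow> nat \<Rightarrow> ('l,'v) bstate \<Rightarrow> bool" where
  "I_abt n m s = (\<forall>j<n. snd (txn_status s j) = Aborting \<longrightarrow>
      (\<exists>b. j \<in> txn_dep s b) \<or> ext m (pcs s) (aclaim j))"

definition inv :: "nat \<Rightarrow> nat \<Rightarrow> ('l,'v) bstate \<Rightarrow> bool" where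
  "inv n m s = (I_fin s \<and> I_res m s \<and> I_lock m s \<and> I_blk m s \<and> I_abs m s \<and> I_dep m s
     \<and> I_cnt m s \<and> I_rdy n m s \<and> I_exe n m s \<and> I_abt n m s)"

lemma P_fin:
  assumes "tstep n tx init t s s'" "t < m" "inv n m s"
  shows "I_fin s'"
  using assms(1) assms(2,3)
  apply (cases rule: tstep.cases)
  apply (auto simp: defs inv_def I_fin_def)
  done

lemma P_res:
  assumes "tstep n tx init t s s'" "t < m" "inv n m s"
  shows "I_res m s'"
proof -
  have R: "resv (pcs s t)" using assms(2,3) by (auto simp: inv_def I_res_def)
  show ?thesis
  using assms(1) R assms(2,3)
  apply (cases rule: tstep.cases)
  apply (auto simp: defs inv_def I_fin_def I_res_def)
  done
qed

lemma P_blk: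
  assumes "tstep n tx init t s s'" "t < m" "inv n m s"
  shows "I_blk m s'"
  using assms(1) assms(2,3)
  apply (cases rule: tstep.cases)
  apply (auto simp: defs inv_def I_blk_def dest: mvread_err)
  done

lemma P_cnt:
  assumes "tstep n tx init t s s'" "t < m" "inv n m s"
  shows "I_cnt m s'"
  using surplus_mono[OF assms(1,2)] assms(3) by (simp add: inv_def I_cnt_def)


lemma eclaim_active: "eclaim j p \<Longrightarrow> active p"
  by (induct j p rule: eclaim.induct) simp_all
lemma rclaim_active: "rclaim j p \<Longrightarrow> active p"
  by (induct j p rule: rclaim.induct) simp_all
lemma aclaim_active: "aclaim j p \<Longrightarrow> active p"
  by (induct j p rule: aclaim.induct) simp_all
lemma swp_active: "swp p = Some b \<Longrightarrow> active p"
  by (induct p rule: swp.induct) simp_all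

lemma eclaim_Loop[simp]: "eclaim j (Loop tk) = (\<exists>i. tk = Some (ExecTask j i))"
proof (cases tk)
  case (Some a)
  then show ?thesis by (cases a) auto
qed simp
lemma active_Loop[simp]: "active (Loop tk) = (tk \<noteq> None)"
  by (cases tk; auto)

lemma lock_step_same:
  assumes "I_lock m s" "pcs s t = q" "holds p = holds q" "dep_lock s' = dep_lock s"
     "pcs s' = (pcs s)(t:=p)"
  shows "I_lock m s'"
proof -
  have H: "\<And>t'. holds (pcs s' t') = holds (pcs s t')" using assms(2,3,5) by auto
  show ?thesis using assms(1) unfolding I_lock_def H assms(4) .
qed

lemma lock_absd:
  assumes "I_lock m s" "t < m" "absd (pcs s t) = Some b"
  shows "dep_lock s b"
proof -
  have "holds (pcs s t) = Some b" using assms(3) by (cases "pcs s t") auto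
  then show ?thesis using assms(1,2) unfolding I_lock_def by blast
qed



lemma lock_same2:
  assumes "I_lock m s" "\<And>t'. holds (pcs s' t') = holds (pcs s t')" "dep_lock s' = dep_lock s"
  shows "I_lock m s'"
  using assms(1) unfolding I_lock_def assms(2,3) .

lemma lock_acquire:
  assumes IL: "I_lock m s" and t: "t < m" and h0: "holds (pcs s t) = None" and nl: "\<not> dep_lock s b"
    and hp: "holds p = Some b"
    and P: "pcs s' = (pcs s)(t := p)" and D: "dep_lock s' = (dep_lock s)(b := True)"
  shows "I_lock m s'"
proof -
  have L1: "\<And>c. dep_lock s c = (\<exists>t<m. holds (pcs s t) = Some c)" using IL unfolding I_lock_def by blast
  have L2: "\<And>t1 t2. t1 < m \<Longrightarrow> t2 < m \<Longrightarrow> holds (pcs s t1) \<noteq> None \<Longrightarrow> holds (pcs s t1) = holds (pcs s t2) \<Longrightarrow> t1 = t2"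
    using IL unfolding I_lock_def by blast
  have nb: "\<And>t'. t' < m \<Longrightarrow> holds (pcs s t') \<noteq> Some b" using L1 nl by blast
  have A: "\<forall>c. dep_lock s' c = (\<exists>t'<m. holds (pcs s' t') = Some c)"
  proof
    fix c
    show "dep_lock s' c = (\<exists>t'<m. holds (pcs s' t') = Some c)"
    proof (cases "c = b")
      case True
      then show ?thesis using D P t hp by auto
    next
      case False
      have "dep_lock s' c = dep_lock s c" using D False by simp
      also have "\<dots> = (\<exists>t'<m. holds (pcs s t') = Some c)" by (rule L1)
      also have "\<dots> = (\<exists>t'<m. holds (pcs s' t') = Some c)"
      proof
        assume "\<exists>t'<m. holds (pcs s t') = Some c"
        then obtain t' where "t' < m" "holds (pcs s t') = Some c" by blast
        moreover have "t' \<noteq> t" using h0 calculation by auto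
        ultimately show "\<exists>t'<m. holds (pcs s' t') = Some c" using P by auto
      next
        assume "\<exists>t'<m. holds (pcs s' t') = Some c"
        then obtain t' where "t' < m" "holds (pcs s' t') = Some c" by blast
        moreover have "t' \<noteq> t" using hp False P calculation by auto
        ultimately show "\<exists>t'<m. holds (pcs s t') = Some c" using P by auto
      qed
      finally show ?thesis .
    qed
  qed
  have B: "\<forall>t1<m. \<forall>t2<m. holds (pcs s' t1) \<noteq> None \<longrightarrow> holds (pcs s' t1) = holds (pcs s' t2) \<longrightarrow> t1 = t2"
  proof (intro allI impI)
    fix t1 t2 assume a: "t1 < m" "t2 < m" "holds (pcs s' t1) \<noteq> None" "holds (pcs s' t1) = holds (pcs s' t2)"
    show "t1 = t2"
    proof (cases "t1 = t")
      case True
      then show ?thesis using a P hp nb by (cases "t2 = t") auto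
    next
      case False
      then show ?thesis using a P hp nb L2[of t1 t2] by (cases "t2 = t") auto
    qed
  qed
  show ?thesis unfolding I_lock_def using A B by blast
qed

lemma lock_release:
  assumes IL: "I_lock m s" and t: "t < m" and h0: "holds (pcs s t) = Some b"
    and hp: "holds p = None"
    and P: "pcs s' = (pcs s)(t := p)" and D: "dep_lock s' = (dep_lock s)(b := False)"
  shows "I_lock m s'"
proof -
  have L1: "\<And>c. dep_lock s c = (\<exists>t<m. holds (pcs s t) = Some c)" using IL unfolding I_lock_def by blast
  have L2: "\<And>t1 t2. t1 < m \<Longrightarrow> t2 < m \<Longrightarrow> holds (pcs s t1) \<noteq> None \<Longrightarrow> holds (pcs s t1) = holds (pcs s t2) \<Longrightarrow> t1 = t2"
    using IL unfolding I_lock_def by blast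
  have nb: "\<And>t'. t' < m \<Longrightarrow> t' \<noteq> t \<Longrightarrow> holds (pcs s t') \<noteq> Some b" using L2 t h0 by fastforce
  have A: "\<forall>c. dep_lock s' c = (\<exists>t'<m. holds (pcs s' t') = Some c)"
  proof
    fix c
    show "dep_lock s' c = (\<exists>t'<m. holds (pcs s' t') = Some c)"
    proof (cases "c = b")
      case True
      then show ?thesis using D P t hp nb by auto
    next
      case False
      have "dep_lock s' c = dep_lock s c" using D False by simp
      also have "\<dots> = (\<exists>t'<m. holds (pcs s t') = Some c)" by (rule L1)
      also have "\<dots> = (\<exists>t'<m. holds (pcs s' t') = Some c)"
      proof
        assume "\<exists>t'<m. holds (pcs s t') = Some c"
        then obtain t' where "t' < m" "holds (pcs s t') = Some c" by blast
        moreover have "t' \<noteq> t" using h0 False calculation by auto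
        ultimately show "\<exists>t'<m. holds (pcs s' t') = Some c" using P by auto
      next
        assume "\<exists>t'<m. holds (pcs s' t') = Some c"
        then obtain t' where "t' < m" "holds (pcs s' t') = Some c" by blast
        moreover have "t' \<noteq> t" using hp P calculation by auto
        ultimately show "\<exists>t'<m. holds (pcs s t') = Some c" using P by auto
      qed
      finally show ?thesis .
    qed
  qed
  have B: "\<forall>t1<m. \<forall>t2<m. holds (pcs s' t1) \<noteq> None \<longrightarrow> holds (pcs s' t1) = holds (pcs s' t2) \<longrightarrow> t1 = t2"
  proof (intro allI impI)
    fix t1 t2 assume a: "t1 < m" "t2 < m" "holds (pcs s' t1) \<noteq> None" "holds (pcs s' t1) = holds (pcs s' t2)"
    show "t1 = t2"
    proof (cases "t1 = t")
      case True
      then show ?thesis using a P hp by auto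
    next
      case False
      then show ?thesis using a P hp L2[of t1 t2] by (cases "t2 = t") auto
    qed
  qed
  show ?thesis unfolding I_lock_def using A B by blast
qed

lemma P_lock:
  assumes "tstep n tx init t s s'" "t < m" "inv n m s"
  shows "I_lock m s'"
proof -
  have IL: "I_lock m s" using assms(3) by (simp add: inv_def)
  show ?thesis
  apply (cases rule: tstep.cases[OF assms(1)]; ((rule lock_same2[OF IL], simp add: defs, simp add: defs); fail)?)
  apply (rule lock_acquire[OF IL assms(2)]; simp add: defs)
  apply (rule lock_release[OF IL assms(2)]; simp add: defs)
  apply (rule lock_release[OF IL assms(2)]; simp add: defs)
  done
qed



lemma P_abt:
  assumes "tstep n tx init t s s'" "t < m" "inv n m s"
  shows "I_abt n m s'"
  unfolding I_abt_def
proof (intro allI impI)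
  fix j assume j: "j < n" "snd (txn_status s' j) = Aborting"
  have R: "resv (pcs s t)" using assms(2,3) by (auto simp: inv_def I_res_def)
  have old: "snd (txn_status s j) = Aborting \<longrightarrow> (\<exists>b. j \<in> txn_dep s b) \<or> ext m (pcs s) (aclaim j)"
    using assms(3) j(1) by (auto simp: inv_def I_abt_def)
  show "(\<exists>b. j \<in> txn_dep s' b) \<or> ext m (pcs s') (aclaim j)"
    using assms(1) R old j(2) assms(2)
    apply (cases rule: tstep.cases)
    apply (auto simp: defs ext_split[OF assms(2)] split: if_splits)
    apply (rule_tac x=ba in exI, simp)
    apply metis
    apply (erule_tac x=b in allE, simp)
    done
qed



lemma P_abs:
  assumes "tstep n tx init t s s'" "t < m" "inv n m s"
  shows "I_abs m s'"
proof -
  have A: "\<forall>b. absd (pcs s t) = Some b \<longrightarrow> snd (txn_status s b) \<noteq> Executed \<or> ext m (pcs s) (\<lambda>p. swp p = Some b)"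
    using assms(2,3) by (auto simp: inv_def I_abs_def)
  have L: "\<forall>t'<m. \<forall>b. absd (pcs s t') = Some b \<longrightarrow> dep_lock s b"
    using assms(3) lock_absd by (auto simp: inv_def)
  show ?thesis
  using assms(1) A L assms(2,3)
  apply (cases rule: tstep.cases)
  apply (auto simp: defs inv_def I_abs_def ext_split[OF assms(2)])
  done
qed




lemma P_dep:
  assumes "tstep n tx init t s s'" "t < m" "inv n m s"
  shows "I_dep m s'"
proof -
  have A: "\<forall>b. absd (pcs s t) = Some b \<longrightarrow> snd (txn_status s b) \<noteq> Executed \<or> ext m (pcs s) (\<lambda>p. swp p = Some b)"
    using assms(2,3) by (auto simp: inv_def I_abs_def)
  show ?thesis
  using assms(1) A assms(2,3)
  apply (cases rule: tstep.cases)
  apply (auto simp: defs inv_def I_dep_def ext_split[OF assms(2)])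
  done
qed




lemma P_rdy:
  assumes "tstep n tx init t s s'" "t < m" "inv n m s"
  shows "I_rdy n m s'"
proof -
  have R: "resv (pcs s t)" using assms(2,3) by (auto simp: inv_def I_res_def)
  show ?thesis
  using assms(1) R assms(2,3)
  apply (cases rule: tstep.cases)
  apply (auto simp: defs inv_def I_rdy_def ext_split[OF assms(2)])
  done
qed




lemma P_exe:
  assumes "tstep n tx init t s s'" "t < m" "inv n m s"
  shows "I_exe n m s'"
proof -
  have S: "num_active s - cnt m s \<le> num_active s' - cnt m s'" by (rule surplus_mono[OF assms(1,2)])
  show ?thesis
  using assms(1) S assms(2,3)
  apply (cases rule: tstep.cases)
  apply (auto simp: defs inv_def I_exe_def I_cnt_def ext_split[OF assms(2)] cntf_upd[OF assms(2)])
  done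
qed




lemma inv_init: "inv n m init_state"
  by (simp add: inv_def init_state_def I_fin_def I_res_def I_lock_def I_blk_def I_abs_def I_dep_def
      I_cnt_def I_rdy_def I_exe_def I_abt_def cntf_def)

lemma inv_step: "inv n m s \<Longrightarrow> bstep n tx init m s s' \<Longrightarrow> inv n m s'"
  unfolding bstep_def
proof (elim exE conjE)
  fix t assume i: "inv n m s" and t: "t < m" and st: "tstep n tx init t s s'"
  show "inv n m s'"
    unfolding inv_def
    using P_fin[OF st t i] P_res[OF st t i] P_lock[OF st t i] P_blk[OF st t i] P_abs[OF st t i]
      P_dep[OF st t i] P_cnt[OF st t i] P_rdy[OF st t i] P_exe[OF st t i] P_abt[OF st t i]
    by blast
qed

lemma inv_reach: "(bstep n tx init m)\<^sup>*\<^sup>* init_state s \<Longrightarrow> inv n m s"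
  by (induction rule: rtranclp_induct) (auto intro: inv_init inv_step)

lemma prev_active: "prevalidation p = Some j \<Longrightarrow> active p"
  by (induct p rule: prevalidation.induct) simp_all
lemma oe_active: "ongoing_execution p = Some v \<Longrightarrow> active p"
  by (induct p rule: ongoing_execution.induct) simp_all
lemma ov_active: "ongoing_validation p = Some v \<Longrightarrow> active p"
  by (induct p rule: ongoing_validation.induct) simp_all

lemma final:
  assumes i: "inv n m s" and e: "n \<le> exec_idx s" and v: "n \<le> val_idx s" and z: "num_active s = 0"
  shows "\<forall>k<n. globally_committed n m s k"
proof -
  have "cnt m s \<le> 0" using i z by (simp add: inv_def I_cnt_def)
  then have "card {t. t < m \<and> active (pcs s t)} = 0" by (simp add: cntf_def)
  then have na: "\<And>t. t < m \<Longrightarrow> \<not> active (pcs s t)" by auto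
  have ne: "\<And>Q. (\<And>p. Q p \<Longrightarrow> active p) \<Longrightarrow> \<not> ext m (pcs s) Q"
    unfolding ext_def using na by blast
  have nr: "\<And>j. \<not> ext m (pcs s) (rclaim j)" by (rule ne) (rule rclaim_active)
  have nE: "\<And>j. \<not> ext m (pcs s) (eclaim j)" by (rule ne) (rule eclaim_active)
  have nA: "\<And>j. \<not> ext m (pcs s) (aclaim j)" by (rule ne) (rule aclaim_active)
  have nS: "\<And>b. \<not> ext m (pcs s) (\<lambda>p. swp p = Some b)" by (rule ne) (rule swp_active)
  have ex: "\<forall>j. j < n \<longrightarrow> snd (txn_status s j) = Executed"
  proof (intro allI)
    fix j
    show "j < n \<longrightarrow> snd (txn_status s j) = Executed"
    proof (induction j rule: less_induct)
      case (less j)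
      show ?case
      proof
        assume jn: "j < n"
        show "snd (txn_status s j) = Executed"
        proof (cases "snd (txn_status s j)")
          case Ready_To_Execute
          then show ?thesis using i jn e nr by (auto simp: inv_def I_rdy_def)
        next
          case Executing
          have "0 \<le> cnt m s" by (simp add: cntf_def)
          then show ?thesis using Executing i jn z nE \<open>cnt m s \<le> 0\<close> by (auto simp: inv_def I_exe_def)
        next
          case Aborting
          then obtain b where b: "j \<in> txn_dep s b" using i jn nA by (auto simp: inv_def I_abt_def)
          then have bj: "b < j" using i by (auto simp: inv_def I_blk_def)
          have "snd (txn_status s b) \<noteq> Executed" using b i nS by (auto simp: inv_def I_dep_def)
          moreover have "snd (txn_status s b) = Executed" using less.IH bj jn by simp
          ultimately show ?thesis by simp
        qed simp
      qed
    qed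
  qed
  have "commit_index n m s = val_idx s"
  proof -
    have A: "{j. j < n \<and> snd (txn_status s j) \<noteq> Executed} = {}" using ex by auto
    have B: "{j. \<exists>t<m. prevalidation (pcs s t) = Some j} = {}" using na prev_active by blast
    have C: "{j. \<exists>t<m. \<exists>i. ongoing_execution (pcs s t) = Some (j, i)} = {}" using na oe_active by blast
    have D: "{j. \<exists>t<m. \<exists>i. ongoing_validation (pcs s t) = Some (j, i)} = {}" using na ov_active by blast
    show ?thesis unfolding commit_index_def A B C D by simp
  qed
  then show ?thesis using v by (simp add: globally_committed_def)
qed

theorem mainTheorem2:
  fixes n m :: nat and tx :: "nat \<Rightarrow> ('l, 'v) prog" and init :: "'l \<Rightarrow> 'v"
    and s :: "('l, 'v) bstate"
  assumes "(bstep n tx init m)\<^sup>*\<^sup>* init_state s"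
    and "n \<le> exec_idx s" and "n \<le> val_idx s" and "num_active s = 0"
  shows "\<forall>k<n. globally_committed n m s k"
  using final[OF inv_reach[OF assms(1)] assms(2,3,4)] .


end
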